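(* Let $S=(P,L)$ be a finite $(2,t)$-generalized quadrangle and let $(R,\psi)$ be a faithful representation of $S$ with $\psi(x)=\langle r_x\rangle$. Let $a,b\in P$ be distinct non-collinear points. Set $A=\{r_ar_x: x\in P,\ x\neq a,\ x \text{ not collinear with } a\}$ and $B=\{r_br_x: x\in P,\ x\neq b,\ x\text{ not collinear with } b\}$. Then $|A\cap B|=t+2$.
   Context: A $(2,t)$-generalized quadrangle is a partial linear space in which every line has exactly $3$ points, every point lies on exactly $t+1$ lines, no point is collinear with all points, and for every point $x$ and line $\ell$ with $x\notin\ell$, $x$ is collinear with exactly one point of $\ell$. A representation $(R,\psi)$ of $S$ is a group $R$ with a map $\psi$ assigning to each point $x$ a subgroup $\psi(x)=\langle r_x\rangle$ of order $2$, such that $R$ is generated by the $r_x$ and, for every line $\{x,y,z\}$, $\{1,r_x,r_y,r_z\}$ is a Klein four subgroup. It is faithful if $\psi$ is injective. *)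

theory Defs
  imports "HOL-Algebra.Algebra"
begin

definition collinear :: "'p set set \<Rightarrow> 'p \<Rightarrow> 'p \<Rightarrow> bool" where
  "collinear L x y \<longleftrightarrow> (\<exists>l\<in>L. x \<in> l \<and> y \<in> l)"

definition gen_quadrangle_2 :: "'p set \<Rightarrow> 'p set set \<Rightarrow> nat \<Rightarrow> bool" where
  "gen_quadrangle_2 P L t \<longleftrightarrow>
     \<comment> \<open>partial linear space with three points per line\<close>
     (\<forall>l\<in>L. l \<subseteq> P \<and> card l = 3) \<and>
     (\<forall>l1\<in>L. \<forall>l2\<in>L. l1 \<noteq> l2 \<longrightarrow> card (l1 \<inter> l2) \<le> 1) \<and>
     \<comment> \<open>every point on exactly t+1 lines\<close>
     (\<forall>x\<in>P. card {l\<in>L. x \<in> l} = t + 1) \<and>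
     \<comment> \<open>no point is collinear with all points\<close>
     (\<forall>x\<in>P. \<exists>y\<in>P. \<not> collinear L x y) \<and>
     \<comment> \<open>GQ axiom\<close>
     (\<forall>x\<in>P. \<forall>l\<in>L. x \<notin> l \<longrightarrow> card {y\<in>l. collinear L x y} = 1)"

definition klein_four_subgroup :: "('g, 'b) monoid_scheme \<Rightarrow> 'g set \<Rightarrow> bool" where
  "klein_four_subgroup G H \<longleftrightarrow>
     subgroup H G \<and> card H = 4 \<and> (\<forall>h\<in>H. h \<otimes>\<^bsub>G\<^esub> h = \<one>\<^bsub>G\<^esub>)"

text \<open>A representation: r x is the generator of psi(x) = <r x>, of order 2.\<close>
definition representation ::
    "'p set \<Rightarrow> 'p set set \<Rightarrow> ('g, 'b) monoid_scheme \<Rightarrow> ('p \<Rightarrow> 'g) \<Rightarrow> bool" where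
  "representation P L G r \<longleftrightarrow>
     group G \<and>
     (\<forall>x\<in>P. r x \<in> carrier G \<and> group.ord G (r x) = 2) \<and>
     generate G (r ` P) = carrier G \<and>
     (\<forall>l\<in>L. klein_four_subgroup G (insert \<one>\<^bsub>G\<^esub> (r ` l)))"

definition rep_psi :: "('g, 'b) monoid_scheme \<Rightarrow> ('p \<Rightarrow> 'g) \<Rightarrow> 'p \<Rightarrow> 'g set" where
  "rep_psi G r x = generate G {r x}"

definition faithful_representation ::
    "'p set \<Rightarrow> 'p set set \<Rightarrow> ('g, 'b) monoid_scheme \<Rightarrow> ('p \<Rightarrow> 'g) \<Rightarrow> bool" where
  "faithful_representation P L G r \<longleftrightarrow>
     representation P L G r \<and> inj_on (rep_psi G r) P"

end

theory Submission
  imports Defs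
begin



locale gqr =
  fixes P :: "'p set" and L :: "'p set set" and t :: nat
    and G :: "('g, 'b) monoid_scheme" (structure) and r :: "'p \<Rightarrow> 'g"
  assumes finP: "finite P"
    and gq: "gen_quadrangle_2 P L t"
    and frep: "faithful_representation P L G r"
begin

abbreviation coll where "coll \<equiv> collinear L"

definition line3 :: "'p \<Rightarrow> 'p \<Rightarrow> 'p \<Rightarrow> bool" where
  "line3 u v w \<longleftrightarrow> {u,v,w} \<in> L \<and> u \<noteq> v \<and> v \<noteq> w \<and> u \<noteq> w"

lemma L_sub: "l \<in> L \<Longrightarrow> l \<subseteq> P" using gq unfolding gen_quadrangle_2_def by blast
lemma L_card: "l \<in> L \<Longrightarrow> card l = 3" using gq unfolding gen_quadrangle_2_def by blast
lemma L_fin: "l \<in> L \<Longrightarrow> finite l" using L_card by (metis card.infinite zero_neq_numeral)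
lemma L_int: "l1 \<in> L \<Longrightarrow> l2 \<in> L \<Longrightarrow> l1 \<noteq> l2 \<Longrightarrow> card (l1 \<inter> l2) \<le> 1"
  using gq unfolding gen_quadrangle_2_def by blast
lemma nlines: "x \<in> P \<Longrightarrow> card {l\<in>L. x \<in> l} = t + 1"
  using gq unfolding gen_quadrangle_2_def by blast
lemma noncoll_ex: "x \<in> P \<Longrightarrow> \<exists>y\<in>P. \<not> coll x y"
  using gq unfolding gen_quadrangle_2_def by blast
lemma gqax: "x \<in> P \<Longrightarrow> l \<in> L \<Longrightarrow> x \<notin> l \<Longrightarrow> card {y\<in>l. coll x y} = 1"
  using gq unfolding gen_quadrangle_2_def by blast

lemma coll_def': "coll x y \<longleftrightarrow> (\<exists>l\<in>L. x \<in> l \<and> y \<in> l)"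
  by (simp add: collinear_def)

lemma coll_sym: "coll x y \<longleftrightarrow> coll y x" unfolding coll_def' by blast

lemma coll_P: "coll x y \<Longrightarrow> x \<in> P \<and> y \<in> P" unfolding coll_def' using L_sub by blast

lemma some_line: "x \<in> P \<Longrightarrow> \<exists>l\<in>L. x \<in> l"
proof (rule ccontr)
  assume "x \<in> P" "\<not> (\<exists>l\<in>L. x \<in> l)"
  then have "{l\<in>L. x \<in> l} = {}" by blast
  with nlines[OF \<open>x \<in> P\<close>] show False by simp
qed

lemma coll_refl: "x \<in> P \<Longrightarrow> coll x x" using some_line unfolding coll_def' by blast

lemma ncoll_neq: "\<not> coll x y \<Longrightarrow> x \<in> P \<Longrightarrow> x \<noteq> y" using coll_refl by blast

lemma same_line: "l1 \<in> L \<Longrightarrow> l2 \<in> L \<Longrightarrow> p \<in> l1 \<Longrightarrow> q \<in> l1 \<Longrightarrow> p \<in> l2 \<Longrightarrow> q \<in> l2 \<Longrightarrow> p \<noteq> q \<Longrightarrow> l1 = l2"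
proof (rule ccontr)
  assume a: "l1 \<in> L" "l2 \<in> L" "p \<in> l1" "q \<in> l1" "p \<in> l2" "q \<in> l2" "p \<noteq> q" "l1 \<noteq> l2"
  then have "card (l1 \<inter> l2) \<le> 1" using L_int by blast
  moreover have "{p,q} \<subseteq> l1 \<inter> l2" using a by blast
  moreover have "finite (l1 \<inter> l2)" using L_fin a by blast
  ultimately have "card {p,q} \<le> 1" by (meson card_mono order_trans)
  with a show False by simp
qed

lemma line3_perm: assumes "line3 u v w" shows "line3 v u w \<and> line3 u w v \<and> line3 w v u \<and> line3 v w u \<and> line3 w u v"
proof -
  have e: "{v,u,w} = {u,v,w}" "{u,w,v} = {u,v,w}" "{w,v,u} = {u,v,w}" "{v,w,u} = {u,v,w}" "{w,u,v} = {u,v,w}"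
    by blast+
  show ?thesis using assms unfolding line3_def e by blast
qed

lemma line3_P: "line3 u v w \<Longrightarrow> u \<in> P \<and> v \<in> P \<and> w \<in> P"
  unfolding line3_def using L_sub by blast

lemma line3_coll: assumes "line3 u v w" shows "coll u v \<and> coll v u \<and> coll u w \<and> coll w u \<and> coll v w \<and> coll w v"
proof -
  have L: "{u,v,w} \<in> L" using assms unfolding line3_def by blast
  have "\<And>x y. x \<in> {u,v,w} \<Longrightarrow> y \<in> {u,v,w} \<Longrightarrow> coll x y"
  proof -
    fix x y assume "x \<in> {u,v,w}" "y \<in> {u,v,w}"
    then show "coll x y" unfolding coll_def' using L by (intro bexI[of _ "{u,v,w}"]) simp_all
  qed
  then show ?thesis by simp
qed

lemma line3_neq: "line3 u v w \<Longrightarrow> u \<noteq> v \<and> v \<noteq> w \<and> u \<noteq> w"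
  unfolding line3_def by blast

lemma L_three: assumes "l \<in> L" shows "\<exists>u v w. l = {u,v,w} \<and> line3 u v w"
proof -
  obtain u v w where uvw: "l = {u,v,w}" "u \<noteq> v" "v \<noteq> w" "u \<noteq> w"
    using L_card[OF assms] unfolding card_3_iff by blast
  then have "line3 u v w" using assms unfolding line3_def by simp
  then show ?thesis using uvw(1) by blast
qed

lemma L_eq3: "l \<in> L \<Longrightarrow> u \<in> l \<Longrightarrow> v \<in> l \<Longrightarrow> w \<in> l \<Longrightarrow> u \<noteq> v \<Longrightarrow> v \<noteq> w \<Longrightarrow> u \<noteq> w \<Longrightarrow> l = {u,v,w}"
proof -
  assume a: "l \<in> L" "u \<in> l" "v \<in> l" "w \<in> l" "u \<noteq> v" "v \<noteq> w" "u \<noteq> w"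
  have "card {u,v,w} = 3" using a by simp
  then have c: "card {u,v,w} = card l" using L_card[OF a(1)] by simp
  have sub: "{u,v,w} \<subseteq> l" using a by simp
  show ?thesis using card_subset_eq[OF L_fin[OF a(1)] sub c] by simp
qed

lemma L_through: assumes a: "l \<in> L" "b \<in> l" shows "\<exists>p q. l = {b,p,q} \<and> line3 b p q"
proof -
  obtain u v w where l: "l = {u,v,w}" "line3 u v w" using L_three[OF a(1)] by blast
  have "b = u \<or> b = v \<or> b = w" using a(2) unfolding l(1) by simp
  then show ?thesis
  proof (elim disjE)
    assume bu: "b = u"
    show ?thesis by (rule exI[of _ v], rule exI[of _ w]) (simp add: bu l)
  next
    assume bv: "b = v"
    have e: "l = {v,u,w}" using l(1) by blast
    have "line3 v u w" using line3_perm[OF l(2)] by simp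
    then show ?thesis by (intro exI[of _ u] exI[of _ w]) (simp add: bv e)
  next
    assume bw: "b = w"
    have e: "l = {w,u,v}" using l(1) by blast
    have "line3 w u v" using line3_perm[OF l(2)] by simp
    then show ?thesis by (intro exI[of _ u] exI[of _ v]) (simp add: bw e)
  qed
qed

lemma coll_line: "coll p q \<Longrightarrow> p \<noteq> q \<Longrightarrow> \<exists>w. line3 p q w"
proof -
  assume a: "coll p q" "p \<noteq> q"
  then obtain l where l: "l \<in> L" "p \<in> l" "q \<in> l" unfolding coll_def' by blast
  then obtain x y where xy: "l = {p,x,y}" "line3 p x y" using L_through by blast
  then have "q = x \<or> q = y" using a l by blast
  then show ?thesis
  proof
    assume "q = x" then show ?thesis using xy by blast
  next
    assume "q = y" then show ?thesis using xy line3_perm[of p x y] by blast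
  qed
qed

lemma third_unique: "line3 p q w \<Longrightarrow> line3 p q w' \<Longrightarrow> w = w'"
proof -
  assume a: "line3 p q w" "line3 p q w'"
  then have "{p,q,w} = {p,q,w'}" unfolding line3_def using same_line[of "{p,q,w}" "{p,q,w'}" p q] by blast
  moreover have "w' \<in> {p,q,w'}" by simp
  ultimately have "w' \<in> {p,q,w}" by simp
  then show ?thesis using a unfolding line3_def by blast
qed

lemma ax_exists: "line3 u v w \<Longrightarrow> p \<in> P \<Longrightarrow> coll p u \<or> coll p v \<or> coll p w"
proof -
  assume a: "line3 u v w" "p \<in> P"
  show ?thesis
  proof (cases "p \<in> {u,v,w}")
    case True then show ?thesis using a coll_refl by blast
  next
    case False
    have "card {y\<in>{u,v,w}. coll p y} = 1" using gqax a False unfolding line3_def by blast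
    then have "{y\<in>{u,v,w}. coll p y} \<noteq> {}" by (metis card.empty zero_neq_one)
    then show ?thesis by blast
  qed
qed

lemma ax_unique: "line3 u v w \<Longrightarrow> coll p u \<Longrightarrow> coll p v \<Longrightarrow> p \<noteq> u \<Longrightarrow> p \<noteq> v \<Longrightarrow> p = w"
proof (rule ccontr)
  assume a: "line3 u v w" "coll p u" "coll p v" "p \<noteq> u" "p \<noteq> v" "p \<noteq> w"
  have pP: "p \<in> P" using a coll_P by blast
  have "card {y\<in>{u,v,w}. coll p y} = 1" using gqax[OF pP] a unfolding line3_def by blast
  moreover have "{u,v} \<subseteq> {y\<in>{u,v,w}. coll p y}" using a by blast
  moreover have "finite {y\<in>{u,v,w}. coll p y}" by simp
  ultimately have "card {u,v} \<le> 1" using card_mono by metis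
  with a show False unfolding line3_def by simp
qed

lemma t_pos: assumes "x \<in> P" shows "t \<ge> 1"
proof (rule ccontr)
  assume "\<not> t \<ge> 1" then have t0: "t = 0" by simp
  have uniq: "\<And>p l1 l2. p \<in> P \<Longrightarrow> l1 \<in> L \<Longrightarrow> l2 \<in> L \<Longrightarrow> p \<in> l1 \<Longrightarrow> p \<in> l2 \<Longrightarrow> l1 = l2"
  proof -
    fix p l1 l2 assume h: "p \<in> P" "l1 \<in> L" "l2 \<in> L" "p \<in> l1" "p \<in> l2"
    have "card {l\<in>L. p \<in> l} = 1" using nlines[OF h(1)] t0 by simp
    then obtain m where m: "{l\<in>L. p \<in> l} = {m}" by (rule card_1_singletonE)
    have "l1 \<in> {l\<in>L. p \<in> l}" "l2 \<in> {l\<in>L. p \<in> l}" using h by simp_all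
    then show "l1 = l2" unfolding m by simp
  qed
  obtain y where y: "y \<in> P" "\<not> coll x y" using noncoll_ex assms by blast
  obtain ly where ly: "ly \<in> L" "y \<in> ly" using some_line y by blast
  obtain lx where lx: "lx \<in> L" "x \<in> lx" using some_line assms by blast
  have "x \<notin> ly" using y ly unfolding coll_def' by blast
  then have "card {z\<in>ly. coll x z} = 1" using gqax assms ly by blast
  then have "{z\<in>ly. coll x z} \<noteq> {}" by (metis card.empty zero_neq_one)
  then obtain z where z: "z \<in> ly" "coll x z" by blast
  then obtain m where m: "m \<in> L" "x \<in> m" "z \<in> m" unfolding coll_def' by blast
  have zP: "z \<in> P" using z coll_P by blast
  have "m = ly" using uniq[OF zP m(1) ly(1)] m z by blast
  then show False using m ly y unfolding coll_def' by blast
qed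

lemma two_lines: assumes "x \<in> P" shows "\<exists>l1 l2. l1 \<in> L \<and> l2 \<in> L \<and> x \<in> l1 \<and> x \<in> l2 \<and> l1 \<noteq> l2"
proof -
  have c2: "card {l\<in>L. x \<in> l} \<ge> 2" using nlines[OF assms] t_pos[OF assms] by simp
  have fin: "finite {l\<in>L. x \<in> l}"
  proof (rule ccontr)
    assume "infinite {l\<in>L. x \<in> l}"
    then have "card {l\<in>L. x \<in> l} = 0" by simp
    with c2 show False by simp
  qed
  from c2 have "\<not> (\<forall>a\<in>{l\<in>L. x \<in> l}. \<forall>b\<in>{l\<in>L. x \<in> l}. a = b)"
    using card_le_Suc0_iff_eq[OF fin] by simp
  then obtain l1 l2 where "l1 \<in> {l\<in>L. x \<in> l}" "l2 \<in> {l\<in>L. x \<in> l}" "l1 \<noteq> l2"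
    by blast
  then show ?thesis by blast
qed

lemma pt_on_line: "l \<in> L \<Longrightarrow> x \<in> P \<Longrightarrow> x \<notin> l \<Longrightarrow> \<exists>y\<in>l. coll x y"
proof -
  assume a: "l \<in> L" "x \<in> P" "x \<notin> l"
  then have "card {y\<in>l. coll x y} = 1" using gqax by blast
  then have "{y\<in>l. coll x y} \<noteq> {}" by (metis card.empty zero_neq_one)
  then show ?thesis by blast
qed

lemma common2: assumes "a \<in> P" "b \<in> P" "\<not> coll a b"
  shows "\<exists>c d. c \<noteq> d \<and> coll a c \<and> coll b c \<and> coll a d \<and> coll b d \<and> c \<noteq> a \<and> c \<noteq> b \<and> d \<noteq> a \<and> d \<noteq> b"
proof -
  obtain l1 l2 where l: "l1 \<in> L" "l2 \<in> L" "a \<in> l1" "a \<in> l2" "l1 \<noteq> l2" using two_lines assms by blast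
  have "b \<notin> l1" "b \<notin> l2" using l assms unfolding coll_def' by blast+
  obtain c where c: "c \<in> l1" "coll b c" using pt_on_line[OF l(1) assms(2) \<open>b \<notin> l1\<close>] by blast
  obtain d where d: "d \<in> l2" "coll b d" using pt_on_line[OF l(2) assms(2) \<open>b \<notin> l2\<close>] by blast
  have ac: "coll a c" "coll a d" using c d l unfolding coll_def' by blast+
  have "c \<noteq> a" using c(2) assms(3) coll_sym by metis
  have "d \<noteq> a" using d(2) assms(3) coll_sym by metis
  have "c \<noteq> b" using ac(1) assms(3) by blast
  have "d \<noteq> b" using ac(2) assms(3) by blast
  have "c \<noteq> d"
  proof
    assume "c = d"
    then have "c \<in> l2" using d by simp
    then have "l1 = l2" using same_line[OF l(1) l(2) l(3) c(1) l(4)] \<open>c \<noteq> a\<close> by metis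
    then show False using l(5) by simp
  qed
  note cd = c d
  moreover note \<open>c \<noteq> a\<close> \<open>d \<noteq> a\<close> \<open>c \<noteq> b\<close> \<open>d \<noteq> b\<close> \<open>c \<noteq> d\<close>
  ultimately show ?thesis using ac by (intro exI[of _ c] exI[of _ d]) simp
qed

end



lemma card4_distinct:
  assumes "card {A,B,C,D} = 4"
  shows "A \<noteq> B \<and> A \<noteq> C \<and> A \<noteq> D \<and> B \<noteq> C \<and> B \<noteq> D \<and> C \<noteq> D"
proof -
  have le3: "\<And>x y z. card {x,y,z} \<le> 3"
    by (simp add: card_insert_if)
  show ?thesis
  proof (intro conjI notI)
    assume "A = B" then have "{A,B,C,D} = {B,C,D}" by blast
    then show False using le3[of B C D] assms by simp
  next
    assume "A = C" then have "{A,B,C,D} = {B,C,D}" by blast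
    then show False using le3[of B C D] assms by simp
  next
    assume "A = D" then have "{A,B,C,D} = {B,C,D}" by blast
    then show False using le3[of B C D] assms by simp
  next
    assume "B = C" then have "{A,B,C,D} = {A,C,D}" by blast
    then show False using le3[of A C D] assms by simp
  next
    assume "B = D" then have "{A,B,C,D} = {A,C,D}" by blast
    then show False using le3[of A C D] assms by simp
  next
    assume "C = D" then have "{A,B,C,D} = {A,B,D}" by blast
    then show False using le3[of A B D] assms by simp
  qed
qed

context gqr begin

lemma grp: "group G" using frep unfolding faithful_representation_def representation_def by blast
lemma r_carrier: "p \<in> P \<Longrightarrow> r p \<in> carrier G"
  using frep unfolding faithful_representation_def representation_def by blast
lemma klein: "l \<in> L \<Longrightarrow> klein_four_subgroup G (insert \<one>\<^bsub>G\<^esub> (r ` l))"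
  using frep unfolding faithful_representation_def representation_def by blast
lemma gen: "generate G (r ` P) = carrier G"
  using frep unfolding faithful_representation_def representation_def by blast

lemma r_inj: assumes "p \<in> P" "q \<in> P" "r p = r q" shows "p = q"
proof -
  have "inj_on (rep_psi G r) P" using frep unfolding faithful_representation_def by blast
  moreover have "rep_psi G r p = rep_psi G r q" unfolding rep_psi_def using assms(3) by simp
  ultimately show ?thesis using assms(1,2) by (simp add: inj_on_def)
qed

lemma klein_line: assumes "line3 u v w"
  shows "subgroup {\<one>\<^bsub>G\<^esub>, r u, r v, r w} G" "card {\<one>\<^bsub>G\<^esub>, r u, r v, r w} = 4"
    "\<And>h. h \<in> {\<one>\<^bsub>G\<^esub>, r u, r v, r w} \<Longrightarrow> h \<otimes>\<^bsub>G\<^esub> h = \<one>\<^bsub>G\<^esub>"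
proof -
  have L: "{u,v,w} \<in> L" using assms unfolding line3_def by blast
  have e: "insert \<one>\<^bsub>G\<^esub> (r ` {u,v,w}) = {\<one>\<^bsub>G\<^esub>, r u, r v, r w}" by simp
  show "subgroup {\<one>\<^bsub>G\<^esub>, r u, r v, r w} G" "card {\<one>\<^bsub>G\<^esub>, r u, r v, r w} = 4"
    "\<And>h. h \<in> {\<one>\<^bsub>G\<^esub>, r u, r v, r w} \<Longrightarrow> h \<otimes>\<^bsub>G\<^esub> h = \<one>\<^bsub>G\<^esub>"
    using klein[OF L] unfolding klein_four_subgroup_def e by blast+
qed

lemma line_mult: assumes "line3 u v w" shows "r u \<otimes>\<^bsub>G\<^esub> r v = r w"
proof -
  interpret group G by (rule grp)
  note k = klein_line[OF assms]
  have d: "\<one> \<noteq> r u \<and> \<one> \<noteq> r v \<and> \<one> \<noteq> r w \<and> r u \<noteq> r v \<and> r u \<noteq> r w \<and> r v \<noteq> r w"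
    using card4_distinct[OF k(2)] .
  have P: "u \<in> P" "v \<in> P" "w \<in> P" using line3_P[OF assms] by auto
  have c: "r u \<in> carrier G" "r v \<in> carrier G" using P r_carrier by auto
  have uu: "r u \<otimes> r u = \<one>" using k(3) by simp
  have "r u \<otimes> r v \<in> {\<one>, r u, r v, r w}"
    using subgroup.m_closed[OF k(1)] by simp
  moreover have "r u \<otimes> r v \<noteq> \<one>"
  proof
    assume "r u \<otimes> r v = \<one>"
    then have "r u \<otimes> r v = r u \<otimes> r u" using uu by simp
    then have "r v = r u" using c l_cancel by blast
    then show False using d by simp
  qed
  moreover have "r u \<otimes> r v \<noteq> r u"
  proof
    assume "r u \<otimes> r v = r u"
    then have "r u \<otimes> r v = r u \<otimes> \<one>" using c by simp
    then have "r v = \<one>" using c l_cancel by blast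
    then show False using d by simp
  qed
  moreover have "r u \<otimes> r v \<noteq> r v"
  proof
    assume "r u \<otimes> r v = r v"
    then have "r u \<otimes> r v = \<one> \<otimes> r v" using c by simp
    then have "r u = \<one>" using c r_cancel by blast
    then show False using d by simp
  qed
  ultimately show ?thesis by blast
qed

lemma invol: assumes "p \<in> P" shows "r p \<otimes>\<^bsub>G\<^esub> r p = \<one>\<^bsub>G\<^esub>"
proof -
  obtain l where "l \<in> L" "p \<in> l" using some_line assms by blast
  then obtain x y where "line3 p x y" using L_through by blast
  then show ?thesis using klein_line(3) by blast
qed

lemma r_ne1: assumes "p \<in> P" shows "r p \<noteq> \<one>\<^bsub>G\<^esub>"
proof -
  obtain l where "l \<in> L" "p \<in> l" using some_line assms by blast
  then obtain x y where "line3 p x y" using L_through by blast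
  then show ?thesis using card4_distinct[OF klein_line(2)] by metis
qed

lemma comm_line: assumes "line3 u v w" shows "r u \<otimes>\<^bsub>G\<^esub> r v = r v \<otimes>\<^bsub>G\<^esub> r u"
  using line_mult[OF assms] line_mult[of v u w] line3_perm[OF assms] by simp

end



context gqr begin

lemma neq_by: "coll x y \<Longrightarrow> \<not> coll x z \<Longrightarrow> y \<noteq> z" by auto

lemma cs: "coll x y \<Longrightarrow> coll y x" using coll_sym by blast

lemma nc_common: assumes "\<not> coll a b" "coll a c" "coll b c" "coll a d" "coll b d" "c \<noteq> d"
  "c \<noteq> a" "c \<noteq> b" "d \<noteq> a" "d \<noteq> b"
  shows "\<not> coll c d"
proof
  assume "coll c d"
  then obtain f where f: "line3 c d f" using coll_line assms(6) by blast
  have "a = f" using ax_unique[OF f assms(2) assms(4)] assms(7,9) by metis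
  moreover have "b = f" using ax_unique[OF f assms(3) assms(5)] assms(8,10) by metis
  ultimately have "a = b" by simp
  then show False using assms(1) coll_refl coll_P assms(2) by metis
qed

lemma comm_noncoll: assumes aP: "a \<in> P" and bP: "b \<in> P" and nab: "\<not> coll a b"
  shows "r a \<otimes> r b = r b \<otimes> r a"
proof -
  interpret group G by (rule grp)
  obtain c d where cd: "c \<noteq> d" "coll a c" "coll b c" "coll a d" "coll b d" "c \<noteq> a" "c \<noteq> b" "d \<noteq> a" "d \<noteq> b"
    using common2[OF aP bP nab] by blast
  have ncd: "\<not> coll c d" using nc_common[OF nab cd(2-5) cd(1) cd(6-9)] .
  have nba: "\<not> coll b a" using nab coll_sym by blast
  obtain a1 where a1: "line3 a c a1" using coll_line cd(2) cd(6) by metis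
  obtain b1 where b1: "line3 b c b1" using coll_line cd(3) cd(7) by metis
  obtain a2 where a2: "line3 a d a2" using coll_line cd(4) cd(8) by metis
  obtain b2 where b2: "line3 b d b2" using coll_line cd(5) cd(9) by metis
  note a1p = line3_perm[OF a1] and b1p = line3_perm[OF b1] and a2p = line3_perm[OF a2] and b2p = line3_perm[OF b2]
  note a1c = line3_coll[OF a1] and b1c = line3_coll[OF b1] and a2c = line3_coll[OF a2] and b2c = line3_coll[OF b2]
  note a1n = line3_neq[OF a1] and b1n = line3_neq[OF b1] and a2n = line3_neq[OF a2] and b2n = line3_neq[OF b2]
  have P: "a1 \<in> P" "b1 \<in> P" "a2 \<in> P" "b2 \<in> P" "c \<in> P" "d \<in> P"
    using line3_P[OF a1] line3_P[OF b1] line3_P[OF a2] line3_P[OF b2] by auto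
  have nb_a2: "\<not> coll b a2"
  proof
    assume h: "coll b a2"
    have "b \<noteq> a2" using a2c nab by (metis)
    then have "b = a" using ax_unique[of d a2 a b] a2p cd(5) h cd(9) by (metis cs)
    then show False using nab coll_refl aP by simp
  qed
  have na_b1: "\<not> coll a b1"
  proof
    assume h: "coll a b1"
    have "a \<noteq> b1" using b1c nba by (metis)
    then have "a = b" using ax_unique[of c b1 b a] b1p cd(2) h cd(6) by (metis)
    then show False using nab coll_refl aP by simp
  qed
  have nb_a1: "\<not> coll b a1"
  proof
    assume h: "coll b a1"
    have "b \<noteq> a1" using a1c nab by (metis)
    then have "b = a" using ax_unique[of c a1 a b] a1p cd(3) h cd(7) by (metis)
    then show False using nab coll_refl aP by simp
  qed
  have na_b2: "\<not> coll a b2"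
  proof
    assume h: "coll a b2"
    have "a \<noteq> b2" using b2c nba by (metis)
    then have "a = b" using ax_unique[of d b2 b a] b2p cd(4) h cd(8) by (metis)
    then show False using nab coll_refl aP by simp
  qed
  have nc_a2: "\<not> coll c a2"
  proof
    assume h: "coll c a2"
    have "c \<noteq> a2" using nb_a2 cd(3) by metis
    then have "c = d" using ax_unique[of a a2 d c] a2p cs[OF cd(2)] h cd(6) by metis
    then show False using cd(1) by simp
  qed
  have nd_a1: "\<not> coll d a1"
  proof
    assume h: "coll d a1"
    have "d \<noteq> a1" using nb_a1 cd(5) by metis
    then have "d = c" using ax_unique[of a a1 c d] a1p cs[OF cd(4)] h cd(8) by metis
    then show False using cd(1) by simp
  qed
  have nd_b1: "\<not> coll d b1"
  proof
    assume h: "coll d b1"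
    have "d \<noteq> b1" using na_b1 cd(4) by metis
    then have "d = c" using ax_unique[of b b1 c d] b1p cs[OF cd(5)] h cd(9) by metis
    then show False using cd(1) by simp
  qed
  have nc_b2: "\<not> coll c b2"
  proof
    assume h: "coll c b2"
    have "c \<noteq> b2" using na_b2 cd(2) by metis
    then have "c = d" using ax_unique[of b b2 d c] b2p cs[OF cd(3)] h cd(7) by metis
    then show False using cd(1) by simp
  qed
  have "coll a2 b \<or> coll a2 c \<or> coll a2 b1" using ax_exists[OF b1 P(3)] .
  then have ab1: "coll a2 b1" using nb_a2 nc_a2 coll_sym by metis
  have "a2 \<noteq> b1" using nc_a2 b1c by metis
  then obtain e where e: "line3 a2 b1 e" using coll_line ab1 by metis
  note ep = line3_perm[OF e] and ec = line3_coll[OF e] and en = line3_neq[OF e]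
  have eP: "e \<in> P" using line3_P[OF e] by simp
  have "coll a1 b \<or> coll a1 d \<or> coll a1 b2" using ax_exists[OF b2 P(1)] .
  then have ab2: "coll a1 b2" using nb_a1 nd_a1 coll_sym by metis
  have "a1 \<noteq> b2" using nd_a1 b2c by metis
  then obtain e' where e': "line3 a1 b2 e'" using coll_line ab2 by metis
  have "coll e a \<or> coll e c \<or> coll e a1" using ax_exists[OF a1 eP] .
  moreover have "\<not> coll e a"
  proof
    assume h: "coll e a"
    have "e \<noteq> a" using na_b1 ec by metis
    then have "e = d" using ax_unique[of a a2 d e] a2p h ec en by metis
    then show False using nd_b1 ec by metis
  qed
  moreover have "\<not> coll e c"
  proof
    assume h: "coll e c"
    have "e \<noteq> c" using nc_a2 ec by metis
    then have "e = b" using ax_unique[of c b1 b e] b1p h ec en by metis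
    then show False using nb_a2 ec by metis
  qed
  ultimately have ea1: "coll e a1" by blast
  have "coll e b \<or> coll e d \<or> coll e b2" using ax_exists[OF b2 eP] .
  moreover have "\<not> coll e b"
  proof
    assume h: "coll e b"
    have "e \<noteq> b" using nb_a2 ec by metis
    then have "e = c" using ax_unique[of b b1 c e] b1p h ec en by metis
    then show False using nc_a2 ec by metis
  qed
  moreover have "\<not> coll e d"
  proof
    assume h: "coll e d"
    have "e \<noteq> d" using nd_b1 ec by metis
    then have "e = a" using ax_unique[of d a2 a e] a2p h ec en by metis
    then show False using na_b1 ec by metis
  qed
  ultimately have eb2: "coll e b2" by blast
  have "e \<noteq> a1"
  proof
    assume h: "e = a1"
    have n12: "a1 \<noteq> a2" using nd_a1 a2c by metis
    have "coll a1 a2" using h ec by metis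
    then have "a1 = d" using ax_unique[of a a2 d a1] a2p a1c a1n n12 by metis
    then show False using ncd a1c by metis
  qed
  moreover have "e \<noteq> b2"
  proof
    assume h: "e = b2"
    have n12: "b1 \<noteq> b2" using nd_b1 b2c by metis
    have "coll b2 b1" using h ec by metis
    then have "b2 = c" using ax_unique[of b b1 c b2] b1p b2c b2n n12 by metis
    then show False using ncd b2c coll_sym by metis
  qed
  ultimately have "e = e'" using ax_unique[OF e' ea1 eb2] by blast
  then have e2: "line3 a1 b2 e" using e' by simp
  have ra: "r a \<in> carrier G" and rb: "r b \<in> carrier G" and rc: "r c \<in> carrier G" and rd: "r d \<in> carrier G"
    using r_carrier aP bP P by auto
  have h1: "r a1 = r a \<otimes> r c" using line_mult[OF a1] by simp
  have h2: "r b1 = r b \<otimes> r c" using line_mult[OF b1] by simp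
  have h3: "r a2 = r a \<otimes> r d" using line_mult[OF a2] by simp
  have h4: "r b2 = r b \<otimes> r d" using line_mult[OF b2] by simp
  have E1: "r a2 \<otimes> r b1 = r e" using line_mult[OF e] .
  have E2: "r b1 \<otimes> r a2 = r e" using line_mult ep by blast
  have E3: "r a1 \<otimes> r b2 = r e" using line_mult[OF e2] .
  have cb: "r b \<otimes> r c = r c \<otimes> r b" using comm_line[OF b1] .
  have db: "r b \<otimes> r d = r d \<otimes> r b" using comm_line[OF b2] .
  have ca: "r a \<otimes> r c = r c \<otimes> r a" using comm_line[OF a1] .
  have "(r a \<otimes> r d) \<otimes> (r b \<otimes> r c) = (r a \<otimes> r c) \<otimes> (r b \<otimes> r d)"
    using E1 E3 h1 h2 h3 h4 by simp
  then have "r a \<otimes> (r d \<otimes> (r b \<otimes> r c)) = r a \<otimes> (r c \<otimes> (r b \<otimes> r d))"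
    using ra rb rc rd by (simp add: m_assoc)
  then have "r d \<otimes> (r b \<otimes> r c) = r c \<otimes> (r b \<otimes> r d)"
    using ra rb rc rd by simp
  then have "(r d \<otimes> r b) \<otimes> r c = (r c \<otimes> r b) \<otimes> r d"
    using ra rb rc rd by (simp add: m_assoc)
  then have "(r b \<otimes> r d) \<otimes> r c = (r b \<otimes> r c) \<otimes> r d"
    using cb db by simp
  then have "r b \<otimes> (r d \<otimes> r c) = r b \<otimes> (r c \<otimes> r d)"
    using ra rb rc rd by (simp add: m_assoc)
  then have dc: "r d \<otimes> r c = r c \<otimes> r d"
    using ra rb rc rd by simp
  have "(r a \<otimes> r d) \<otimes> (r b \<otimes> r c) = (r b \<otimes> r c) \<otimes> (r a \<otimes> r d)"
    using E1 E2 h2 h3 by simp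
  moreover have "(r a \<otimes> r d) \<otimes> (r b \<otimes> r c) = (r a \<otimes> r b) \<otimes> (r d \<otimes> r c)"
  proof -
    have "(r a \<otimes> r d) \<otimes> (r b \<otimes> r c) = r a \<otimes> ((r d \<otimes> r b) \<otimes> r c)"
      using ra rb rc rd by (simp add: m_assoc)
    also have "\<dots> = r a \<otimes> ((r b \<otimes> r d) \<otimes> r c)" using db by simp
    also have "\<dots> = (r a \<otimes> r b) \<otimes> (r d \<otimes> r c)"
      using ra rb rc rd by (simp add: m_assoc)
    finally show ?thesis .
  qed
  moreover have "(r b \<otimes> r c) \<otimes> (r a \<otimes> r d) = (r b \<otimes> r a) \<otimes> (r d \<otimes> r c)"
  proof -
    have "(r b \<otimes> r c) \<otimes> (r a \<otimes> r d) = r b \<otimes> ((r c \<otimes> r a) \<otimes> r d)"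
      using ra rb rc rd by (simp add: m_assoc)
    also have "\<dots> = r b \<otimes> ((r a \<otimes> r c) \<otimes> r d)" using ca by simp
    also have "\<dots> = (r b \<otimes> r a) \<otimes> (r c \<otimes> r d)"
      using ra rb rc rd by (simp add: m_assoc)
    also have "\<dots> = (r b \<otimes> r a) \<otimes> (r d \<otimes> r c)" using dc by simp
    finally show ?thesis .
  qed
  ultimately have "(r a \<otimes> r b) \<otimes> (r d \<otimes> r c) = (r b \<otimes> r a) \<otimes> (r d \<otimes> r c)" by simp
  then show ?thesis using ra rb rc rd r_cancel by (meson m_closed)
qed

end



context gqr begin

lemma comm_all: assumes "p \<in> P" "q \<in> P" shows "r p \<otimes> r q = r q \<otimes> r p"
proof (cases "coll p q")
  case True
  show ?thesis
  proof (cases "p = q")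
    case False
    then obtain w where "line3 p q w" using coll_line True by blast
    then show ?thesis using comm_line by blast
  qed simp
next
  case False
  then show ?thesis using comm_noncoll assms by blast
qed

lemma inv_r: assumes "p \<in> P" shows "inv (r p) = r p"
proof -
  interpret group G by (rule grp)
  show ?thesis using inv_equality[OF invol[OF assms]] r_carrier[OF assms] by simp
qed

lemma gen_comm:
  assumes g: "g \<in> carrier G" and gc: "\<And>p. p \<in> P \<Longrightarrow> g \<otimes> r p = r p \<otimes> g"
    and h: "h \<in> generate G (r ` P)"
  shows "g \<otimes> h = h \<otimes> g"
  using h
proof (induction rule: generate.induct)
  case one
  interpret group G by (rule grp)
  show ?case using g by simp
next
  case (incl h)
  then show ?case using gc by blast
next
  case (inv h)
  then obtain p where "p \<in> P" "h = r p" by blast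
  then show ?case using gc inv_r by simp
next
  case (eng h1 h2)
  interpret group G by (rule grp)
  have sub: "r ` P \<subseteq> carrier G" using r_carrier by blast
  have c1: "h1 \<in> carrier G" using generate_in_carrier[OF sub eng(1)] .
  have c2: "h2 \<in> carrier G" using generate_in_carrier[OF sub eng(2)] .
  have "g \<otimes> (h1 \<otimes> h2) = (g \<otimes> h1) \<otimes> h2" using g c1 c2 by (simp add: m_assoc)
  also have "\<dots> = (h1 \<otimes> g) \<otimes> h2" using eng(3) by simp
  also have "\<dots> = h1 \<otimes> (g \<otimes> h2)" using g c1 c2 by (simp add: m_assoc)
  also have "\<dots> = h1 \<otimes> (h2 \<otimes> g)" using eng(4) by simp
  also have "\<dots> = (h1 \<otimes> h2) \<otimes> g" using g c1 c2 by (simp add: m_assoc)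
  finally show ?case .
qed

lemma cgrp: "comm_group G"
proof -
  interpret group G by (rule grp)
  show ?thesis
  proof (rule group_comm_groupI)
    fix x y assume x: "x \<in> carrier G" and y: "y \<in> carrier G"
    have gens: "\<And>q h. q \<in> P \<Longrightarrow> h \<in> generate G (r ` P) \<Longrightarrow> r q \<otimes> h = h \<otimes> r q"
      using gen_comm r_carrier comm_all by blast
    have "\<And>p. p \<in> P \<Longrightarrow> x \<otimes> r p = r p \<otimes> x"
      using gens x gen by metis
    then show "x \<otimes> y = y \<otimes> x" using gen_comm[OF x] y gen by blast
  qed
qed

lemma rr_cancel: "p \<in> P \<Longrightarrow> x \<in> carrier G \<Longrightarrow> r p \<otimes> (r p \<otimes> x) = x"
proof -
  assume a: "p \<in> P" "x \<in> carrier G"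
  interpret group G by (rule grp)
  have "r p \<otimes> (r p \<otimes> x) = (r p \<otimes> r p) \<otimes> x" using a r_carrier by (simp add: m_assoc)
  then show ?thesis using invol a by simp
qed

lemma test: assumes "a \<in> P" "b \<in> P" "x \<in> P" "y \<in> P" "c \<in> P" "a' \<in> P" "x' \<in> P" "w \<in> P" "m \<in> P"
  "r b = r a \<otimes> (r x \<otimes> r y)" "r a' = r a \<otimes> r c" "r x' = r x \<otimes> r c" "r w = r b \<otimes> r a'" "r m = r y \<otimes> r x'"
  shows "r w = r m"
proof -
  interpret comm_group G by (rule cgrp)
  show ?thesis using assms by (simp add: m_ac rr_cancel invol r_carrier)
qed

end



context gqr begin

lemma ncref: "\<not> coll p q \<Longrightarrow> p \<in> P \<Longrightarrow> p \<noteq> q" using coll_refl by blast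

lemma NC: assumes p: "line3 p c p'" and q: "line3 q c q'" and npq: "\<not> coll p q" and pq: "p \<noteq> q"
  shows "p' \<noteq> q' \<and> \<not> coll p' q'"
proof -
  note pc = line3_coll[OF p] and qc = line3_coll[OF q] and pn = line3_neq[OF p] and qn = line3_neq[OF q]
  note pp = line3_perm[OF p] and qp = line3_perm[OF q]
  have "p' \<noteq> q'"
  proof
    assume e: "p' = q'"
    have "q \<noteq> p'" using npq pc by metis
    then have "q = p" using ax_unique[of c p' p q] pp qc qn e by metis
    then show False using pq by simp
  qed
  moreover have "\<not> coll p' q'"
  proof
    assume h: "coll p' q'"
    have "p' = q" using ax_unique[of c q' q p'] qp h pc pn \<open>p' \<noteq> q'\<close> by metis
    then show False using npq pc by metis
  qed
  ultimately show ?thesis by blast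
qed

lemma L4a: assumes P: "b \<in> P" "a \<in> P" "x \<in> P" "y \<in> P"
  and R: "r b = r a \<otimes> (r x \<otimes> r y)"
  and n: "\<not> coll b a" "\<not> coll b x" "\<not> coll b y" and cxy: "coll x y" and xy: "x \<noteq> y"
  shows False
proof -
  interpret comm_group G by (rule cgrp)
  obtain z where z: "line3 x y z" using coll_line cxy xy by blast
  note zc = line3_coll[OF z]
  have "coll b x \<or> coll b y \<or> coll b z" using ax_exists[OF z P(1)] .
  then have bz: "coll b z" using n by blast
  have "b \<noteq> z" using zc n(2) by metis
  then obtain w where w: "line3 b z w" using coll_line bz by blast
  have zP: "z \<in> P" and wP: "w \<in> P" using line3_P[OF z] line3_P[OF w] by auto
  have "r w = r a" using R line_mult[OF z, symmetric] line_mult[OF w, symmetric] P zP wP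
    by (simp add: m_ac rr_cancel invol r_carrier)
  then have "w = a" using r_inj wP P by blast
  then show False using line3_coll[OF w] n(1) by blast
qed

lemma L3: assumes P: "p \<in> P" "q \<in> P" "s \<in> P"
  and R: "r s = r p \<otimes> r q"
  and n: "\<not> coll p q" "\<not> coll p s" "\<not> coll q s"
  and c: "coll p c" "coll q c" "c \<noteq> p" "c \<noteq> q"
  shows "coll s c"
proof (rule ccontr)
  assume nsc: "\<not> coll s c"
  interpret comm_group G by (rule cgrp)
  obtain p' where p': "line3 p c p'" using coll_line c(1) c(3) by metis
  obtain q' where q': "line3 q c q'" using coll_line c(2) c(4) by metis
  note pc = line3_coll[OF p'] and qc = line3_coll[OF q']
  have pq: "p \<noteq> q" using ncref n(1) P(1) by blast
  have "coll s p \<or> coll s c \<or> coll s p'" using ax_exists[OF p' P(3)] .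
  then have sp: "coll s p'" using n(2) nsc coll_sym by metis
  have "s \<noteq> p'" using nsc pc by metis
  then obtain m where m: "line3 s p' m" using coll_line sp by metis
  have Ps: "p' \<in> P" "q' \<in> P" "m \<in> P" "c \<in> P" using line3_P[OF p'] line3_P[OF q'] line3_P[OF m] by auto
  have "r m = r q'" using R line_mult[OF p', symmetric] line_mult[OF q', symmetric] line_mult[OF m, symmetric] P Ps
    by (simp add: m_ac rr_cancel invol r_carrier)
  then have "m = q'" using r_inj Ps by blast
  then have "coll p' q'" using line3_coll[OF m] by simp
  then show False using NC[OF p' q' n(1) pq] by blast
qed

lemma S2: assumes P: "b \<in> P" "a \<in> P" "x \<in> P" "y \<in> P"
  and R: "r b = r a \<otimes> (r x \<otimes> r y)"
  and n: "\<not> coll b a" "\<not> coll b x" "\<not> coll b y" "\<not> coll a x" "\<not> coll a y" "\<not> coll x y"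
  and c: "coll a c" "coll x c" "c \<noteq> a" "c \<noteq> x"
  shows "coll y c"
proof (rule ccontr)
  assume ncy: "\<not> coll y c"
  interpret comm_group G by (rule cgrp)
  obtain a' where a': "line3 a c a'" using coll_line c(1) c(3) by metis
  obtain x' where x': "line3 x c x'" using coll_line c(2) c(4) by metis
  note ac = line3_coll[OF a'] and xc = line3_coll[OF x'] and ap = line3_perm[OF a'] and xp = line3_perm[OF x']
  note an = line3_neq[OF a'] and xn = line3_neq[OF x']
  have Ps: "a' \<in> P" "x' \<in> P" "c \<in> P" using line3_P[OF a'] line3_P[OF x'] by auto
  have "coll y a \<or> coll y c \<or> coll y a'" using ax_exists[OF a' P(4)] .
  then have ya: "coll y a'" using n(5) ncy coll_sym by metis
  have "coll y x \<or> coll y c \<or> coll y x'" using ax_exists[OF x' P(4)] .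
  then have yx: "coll y x'" using n(6) ncy coll_sym by metis
  have yna: "y \<noteq> a'" using ncy ac by metis
  have ynx: "y \<noteq> x'" using ncy xc by metis
  show False
  proof (cases "coll b c")
    case True
    have bc: "b \<noteq> c" using n(1) c(1) coll_sym by metis
    have nba': "\<not> coll b a'"
    proof
      assume h: "coll b a'"
      have "b \<noteq> a'" using n(1) ac coll_sym by metis
      then have "b = a" using ax_unique[of c a' a b] ap True h bc by metis
      then show False using n(1) coll_refl P(1) by simp
    qed
    have nbx': "\<not> coll b x'"
    proof
      assume h: "coll b x'"
      have "b \<noteq> x'" using n(2) xc coll_sym by metis
      then have "b = x" using ax_unique[of c x' x b] xp True h bc by metis
      then show False using n(2) coll_refl P(1) by simp
    qed
    have R': "r b = r x' \<otimes> (r y \<otimes> r a')" using R line_mult[OF a', symmetric] line_mult[OF x', symmetric] P Ps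
      by (simp add: m_ac rr_cancel invol r_carrier)
    show False using L4a[OF P(1) Ps(2) P(4) Ps(1) R' nbx' n(3) nba' ya yna] .
  next
    case False
    have "coll b a \<or> coll b c \<or> coll b a'" using ax_exists[OF a' P(1)] .
    then have ba: "coll b a'" using n(1) False by metis
    have "coll b x \<or> coll b c \<or> coll b x'" using ax_exists[OF x' P(1)] .
    then have bx: "coll b x'" using n(2) False by metis
    have "b \<noteq> a'" using False ac coll_sym by metis
    then obtain w where w: "line3 b a' w" using coll_line ba by metis
    obtain m where m: "line3 y x' m" using coll_line yx ynx by metis
    have Pw: "w \<in> P" "m \<in> P" using line3_P[OF w] line3_P[OF m] by auto
    have "r w = r m" using R line_mult[OF a', symmetric] line_mult[OF x', symmetric] line_mult[OF w, symmetric] line_mult[OF m, symmetric] P Ps Pw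
      by (simp add: m_ac rr_cancel invol r_carrier)
    then have wm: "w = m" using r_inj Pw by blast
    have nbm: "\<not> coll b m"
    proof
      assume h: "coll b m"
      have "b \<noteq> m" using n(3) line3_coll[OF m] coll_sym by metis
      moreover have "b \<noteq> x'" using False xc coll_sym by metis
      ultimately have "b = y" using ax_unique[of x' m y b] line3_perm[OF m] h bx by metis
      then show False using n(3) coll_refl P(1) by simp
    qed
    then show False using wm line3_coll[OF w] by simp
  qed
qed

lemma S3: assumes P: "b \<in> P" "a \<in> P" "x \<in> P" "y \<in> P"
  and R: "r b = r a \<otimes> (r x \<otimes> r y)"
  and n: "\<not> coll b a" "\<not> coll b x" "\<not> coll b y" "\<not> coll a x" "\<not> coll a y" "\<not> coll x y"
  and c: "coll a c" "coll x c" "c \<noteq> a" "c \<noteq> x"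
  shows "coll b c"
proof (rule ccontr)
  assume nbc: "\<not> coll b c"
  interpret comm_group G by (rule cgrp)
  have yc: "coll y c" using S2[OF P R n c] .
  obtain a' where a': "line3 a c a'" using coll_line c(1) c(3) by metis
  obtain x' where x': "line3 x c x'" using coll_line c(2) c(4) by metis
  note ac = line3_coll[OF a'] and xc = line3_coll[OF x'] and ap = line3_perm[OF a'] and xp = line3_perm[OF x']
  note an = line3_neq[OF a'] and xn = line3_neq[OF x']
  have Ps: "a' \<in> P" "x' \<in> P" "c \<in> P" using line3_P[OF a'] line3_P[OF x'] by auto
  have ax: "a \<noteq> x" using ncref n(4) P(2) by blast
  have nc: "a' \<noteq> x' \<and> \<not> coll a' x'" using NC[OF a' x' n(4) ax] .
  have "coll b a \<or> coll b c \<or> coll b a'" using ax_exists[OF a' P(1)] .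
  then have ba: "coll b a'" using n(1) nbc by metis
  have "coll b x \<or> coll b c \<or> coll b x'" using ax_exists[OF x' P(1)] .
  then have bx: "coll b x'" using n(2) nbc by metis
  have "b \<noteq> a'" using nbc ac coll_sym by metis
  then obtain w where w: "line3 b a' w" using coll_line ba by metis
  note wc = line3_coll[OF w] and wp = line3_perm[OF w] and wn = line3_neq[OF w]
  have Pw: "w \<in> P" using line3_P[OF w] by auto
  have R3: "r w = r y \<otimes> r x'" using R line_mult[OF a', symmetric] line_mult[OF x', symmetric] line_mult[OF w, symmetric] P Ps Pw
    by (simp add: m_ac rr_cancel invol r_carrier)
  have yc': "y \<noteq> c" using n(5) c(1) by metis
  have nyx': "\<not> coll y x'"
  proof
    assume h: "coll y x'"
    have "y \<noteq> x'" using n(6) xc coll_sym by metis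
    then have "y = x" using ax_unique[of c x' x y] xp yc h yc' by metis
    then show False using n(6) coll_refl P(4) by simp
  qed
  have nyw: "\<not> coll y w"
  proof
    assume h: "coll y w"
    have "y \<noteq> w" using n(3) wc by metis
    then obtain m where m: "line3 y w m" using coll_line h by metis
    have Pm: "m \<in> P" using line3_P[OF m] by auto
    have "r m = r x'" using R3 line_mult[OF m, symmetric] P Ps Pw Pm
      by (simp add: m_ac rr_cancel invol r_carrier)
    then have "m = x'" using r_inj Pm Ps by blast
    then show False using nyx' line3_coll[OF m] by simp
  qed
  have nxw: "\<not> coll x' w"
  proof
    assume h: "coll x' w"
    have "x' \<noteq> w" using nc wc by metis
    moreover have "x' \<noteq> b" using nbc xc by metis
    ultimately have "x' = a'" using ax_unique[of b w a' x'] wp h bx coll_sym by metis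
    then show False using nc by simp
  qed
  have "c \<noteq> y" using yc' by simp
  moreover have "c \<noteq> x'" using xn by simp
  moreover have x'c: "coll x' c" using xc by blast
  ultimately have cw: "coll w c" using L3[OF P(4) Ps(2) Pw R3 nyx' nyw nxw yc x'c] coll_sym by metis
  have "c \<noteq> w" using nbc wc by metis
  then have "c = b" using ax_unique[of a' w b c] wp ac cw an coll_sym by metis
  then show False using nbc coll_refl P(1) by simp
qed

end



context gqr begin

lemma LN: assumes P: "b \<in> P" "a \<in> P" "x \<in> P" "y \<in> P"
  and R: "r b = r a \<otimes> (r x \<otimes> r y)"
  and n: "\<not> coll b a" "\<not> coll b x" "\<not> coll b y"
  and d: "a \<noteq> x" "a \<noteq> y" "x \<noteq> y"
  shows False
proof -
  interpret comm_group G by (rule cgrp)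
  have Rxa: "r b = r y \<otimes> (r a \<otimes> r x)" using R P by (simp add: m_ac r_carrier)
  have Rya: "r b = r x \<otimes> (r a \<otimes> r y)" using R P by (simp add: m_ac r_carrier)
  have nxy: "\<not> coll x y" using L4a[OF P R n] d by blast
  have nax: "\<not> coll a x" using L4a[OF P(1) P(4) P(2) P(3) Rxa n(3) n(1) n(2)] d by blast
  have nay: "\<not> coll a y" using L4a[OF P(1) P(3) P(2) P(4) Rya n(2) n(1) n(3)] d by blast
  obtain c dd where cd: "c \<noteq> dd" "coll a c" "coll x c" "coll a dd" "coll x dd" "c \<noteq> a" "c \<noteq> x" "dd \<noteq> a" "dd \<noteq> x"
    using common2[OF P(2) P(3) nax] by blast
  note nn = n nax nay nxy
  have bc: "coll b c" using S3[OF P R nn cd(2) cd(3) cd(6) cd(7)] .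
  have yc: "coll y c" using S2[OF P R nn cd(2) cd(3) cd(6) cd(7)] .
  obtain a' where a': "line3 a c a'" using coll_line cd(2) cd(6) by metis
  obtain x' where x': "line3 x c x'" using coll_line cd(3) cd(7) by metis
  note ac = line3_coll[OF a'] and xc = line3_coll[OF x'] and ap = line3_perm[OF a'] and xp = line3_perm[OF x']
  note an = line3_neq[OF a'] and xn = line3_neq[OF x']
  have Ps: "a' \<in> P" "x' \<in> P" "c \<in> P" using line3_P[OF a'] line3_P[OF x'] by auto
  have bnc: "b \<noteq> c" using n(1) cd(2) coll_sym by metis
  have nba': "\<not> coll b a'"
  proof
    assume h: "coll b a'"
    have "b \<noteq> a'" using n(1) ac coll_sym by metis
    then have "b = a" using ax_unique[of c a' a b] ap bc h bnc by metis
    then show False using n(1) coll_refl P(1) by simp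
  qed
  have nbx': "\<not> coll b x'"
  proof
    assume h: "coll b x'"
    have "b \<noteq> x'" using n(2) xc coll_sym by metis
    then have "b = x" using ax_unique[of c x' x b] xp bc h bnc by metis
    then show False using n(2) coll_refl P(1) by simp
  qed
  have R': "r b = r a' \<otimes> (r x' \<otimes> r y)" using R line_mult[OF a', symmetric] line_mult[OF x', symmetric] P Ps
    by (simp add: m_ac rr_cancel invol r_carrier)
  have nc: "a' \<noteq> x' \<and> \<not> coll a' x'" using NC[OF a' x' nax d(1)] .
  have ync: "y \<noteq> c" using nay cd(2) by metis
  have nya': "\<not> coll y a'"
  proof
    assume h: "coll y a'"
    have "y \<noteq> a'" using nay ac coll_sym by metis
    then have "y = a" using ax_unique[of c a' a y] ap yc h ync by metis
    then show False using d by simp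
  qed
  have nyx': "\<not> coll y x'"
  proof
    assume h: "coll y x'"
    have "y \<noteq> x'" using nxy xc coll_sym by metis
    then have "y = x" using ax_unique[of c x' x y] xp yc h ync by metis
    then show False using d by simp
  qed
  have na'y: "\<not> coll a' y" using nya' coll_sym by metis
  have nx'y: "\<not> coll x' y" using nyx' coll_sym by metis
  obtain c1 d1 where cd1: "c1 \<noteq> d1" "coll a' c1" "coll x' c1" "coll a' d1" "coll x' d1" "c1 \<noteq> a'" "c1 \<noteq> x'" "d1 \<noteq> a'" "d1 \<noteq> x'"
    using common2[OF Ps(1) Ps(2) conjunct2[OF nc]] by blast
  obtain e where e: "coll a' e" "coll x' e" "e \<noteq> a'" "e \<noteq> x'" "e \<noteq> c"
  proof (cases "c1 = c")
    case True
    then show ?thesis using that[of d1] cd1 by metis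
  next
    case False
    then show ?thesis using that[of c1] cd1 by metis
  qed
  note nn' = nba' nbx' n(3) conjunct2[OF nc] na'y nx'y
  have ye: "coll y e" using S2[OF P(1) Ps(1) Ps(2) P(4) R' nn' e(1-4)] .
  have be: "coll b e" using S3[OF P(1) Ps(1) Ps(2) P(4) R' nn' e(1-4)] .
  have "e \<noteq> b" using nba' e(1) coll_sym by metis
  then obtain f where f: "line3 b e f" using coll_line be by metis
  note fc = line3_coll[OF f] and fp = line3_perm[OF f] and fn = line3_neq[OF f]
  have ane: "a \<noteq> e" using n(1) be coll_sym by metis
  have xne: "x \<noteq> e" using n(2) be coll_sym by metis
  have nae: "\<not> coll a e"
  proof
    assume h: "coll a e"
    have "e = c" using ax_unique[of a a' c e] ap h e(1) ane e(3) coll_sym by metis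
    then show False using e(5) by simp
  qed
  have nxe: "\<not> coll x e"
  proof
    assume h: "coll x e"
    have "e = c" using ax_unique[of x x' c e] xp h e(2) xne e(4) coll_sym by metis
    then show False using e(5) by simp
  qed
  have "coll a b \<or> coll a e \<or> coll a f" using ax_exists[OF f P(2)] .
  then have af: "coll a f" using n(1) nae coll_sym by metis
  have "coll x b \<or> coll x e \<or> coll x f" using ax_exists[OF f P(3)] .
  then have xf: "coll x f" using n(2) nxe coll_sym by metis
  have "f \<noteq> a" using n(1) fc by metis
  moreover have "f \<noteq> x" using n(2) fc by metis
  ultimately have yf: "coll y f" using S2[OF P R nn af xf] by blast
  have "y \<noteq> e" using n(3) be by metis
  moreover have "y \<noteq> f" using n(3) fc by metis
  ultimately have "y = b" using ax_unique[of e f b y] fp ye yf by metis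
  then show False using n(3) coll_refl P(1) by simp
qed

lemma main: assumes aP: "a \<in> P" and bP: "b \<in> P" and ab: "a \<noteq> b" and nab: "\<not> coll a b"
  shows "card ({r a \<otimes> r x | x. x \<in> P \<and> x \<noteq> a \<and> \<not> collinear L a x}
            \<inter> {r b \<otimes> r x | x. x \<in> P \<and> x \<noteq> b \<and> \<not> collinear L b x}) = t + 2"
proof -
  interpret comm_group G by (rule cgrp)
  let ?A = "{r a \<otimes> r x | x. x \<in> P \<and> x \<noteq> a \<and> \<not> collinear L a x}"
  let ?B = "{r b \<otimes> r x | x. x \<in> P \<and> x \<noteq> b \<and> \<not> collinear L b x}"
  define Xs where "Xs = {x\<in>P. \<not> coll a x \<and> coll b x}"
  have nba: "\<not> coll b a" using nab coll_sym by metis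
  have ra: "r a \<in> carrier G" and rb: "r b \<in> carrier G" using r_carrier aP bP by auto
  have eq: "?A \<inter> ?B = (\<lambda>x. r a \<otimes> r x) ` Xs"
  proof
    show "?A \<inter> ?B \<subseteq> (\<lambda>x. r a \<otimes> r x) ` Xs"
    proof
      fix g assume g: "g \<in> ?A \<inter> ?B"
      then obtain x where x: "g = r a \<otimes> r x" "x \<in> P" "x \<noteq> a" "\<not> coll a x" by blast
      obtain y where y: "g = r b \<otimes> r y" "y \<in> P" "y \<noteq> b" "\<not> coll b y" using g by blast
      have E: "r a \<otimes> r x = r b \<otimes> r y" using x y by simp
      have rx: "r x \<in> carrier G" and ry: "r y \<in> carrier G" using r_carrier x y by auto
      have "coll b x"
      proof (rule ccontr)
        assume nbx: "\<not> coll b x"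
        have "r a \<otimes> (r x \<otimes> r y) = (r a \<otimes> r x) \<otimes> r y" using ra rx ry by (simp add: m_assoc)
        also have "\<dots> = (r b \<otimes> r y) \<otimes> r y" using E by simp
        also have "\<dots> = r b" using rb ry invol y(2) by (simp add: m_assoc)
        finally have R: "r b = r a \<otimes> (r x \<otimes> r y)" by simp
        have xy: "x \<noteq> y"
        proof
          assume "x = y"
          then have "r a \<otimes> r x = r b \<otimes> r x" using E by simp
          then have "r a = r b" using ra rb rx r_cancel by blast
          then show False using r_inj aP bP ab by blast
        qed
        have ay: "a \<noteq> y"
        proof
          assume "a = y"
          then have "r a \<otimes> r x = r a \<otimes> r b" using E comm_all aP bP by simp
          then have "r x = r b" using ra rb rx l_cancel by blast
          then have "x = b" using r_inj x(2) bP by blast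
          then show False using nbx coll_refl bP by simp
        qed
        show False using LN[OF bP aP x(2) y(2) R nba nbx y(4) x(3)[symmetric] ay xy] .
      qed
      then have "x \<in> Xs" unfolding Xs_def using x by blast
      then show "g \<in> (\<lambda>x. r a \<otimes> r x) ` Xs" using x by blast
    qed
  next
    show "(\<lambda>x. r a \<otimes> r x) ` Xs \<subseteq> ?A \<inter> ?B"
    proof
      fix g assume "g \<in> (\<lambda>x. r a \<otimes> r x) ` Xs"
      then obtain x where g: "g = r a \<otimes> r x" and xX: "x \<in> Xs" by blast
      have x: "x \<in> P" "\<not> coll a x" "coll b x" using xX unfolding Xs_def by auto
      have xa: "x \<noteq> a" using x(2) coll_refl aP by metis
      have gA: "g \<in> ?A" using g x xa by blast
      have gB: "g \<in> ?B"
      proof (cases "x = b")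
        case True
        have "g = r b \<otimes> r a" using g True comm_all aP bP by simp
        then show ?thesis using aP ab nba by blast
      next
        case False
        obtain c where c: "line3 b x c" using coll_line x(3) False by metis
        note cc = line3_coll[OF c] and cp = line3_perm[OF c] and cn = line3_neq[OF c]
        have "coll a b \<or> coll a x \<or> coll a c" using ax_exists[OF c aP] .
        then have acl: "coll a c" using nab x(2) by metis
        have anc: "a \<noteq> c" using nab cc by metis
        obtain y where y: "line3 a c y" using coll_line acl anc by metis
        note yc = line3_coll[OF y] and yp = line3_perm[OF y] and yn = line3_neq[OF y]
        have Ps: "c \<in> P" "y \<in> P" using line3_P[OF c] line3_P[OF y] by auto
        have nby: "\<not> coll b y"
        proof
          assume h: "coll b y"
          have bc: "b \<noteq> c" using cn by simp
          have "b \<noteq> y" using nab yc by metis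
          then have "b = a" using ax_unique[of c y a b] yp cc h bc by metis
          then show False using ab by simp
        qed
        have ynb: "y \<noteq> b" using nby coll_refl bP by metis
        have "r x = r b \<otimes> r c" using line_mult cp by metis
        moreover have "r y = r a \<otimes> r c" using line_mult[OF y] by simp
        ultimately have "g = r b \<otimes> r y" using g aP bP x(1) Ps
          by (simp add: m_ac r_carrier)
        then show ?thesis using Ps ynb nby by blast
      qed
      show "g \<in> ?A \<inter> ?B" using gA gB by blast
    qed
  qed
  have inj: "inj_on (\<lambda>x. r a \<otimes> r x) Xs"
  proof (rule inj_onI)
    fix x x' assume h: "x \<in> Xs" "x' \<in> Xs" "r a \<otimes> r x = r a \<otimes> r x'"
    have P2: "x \<in> P" "x' \<in> P" using h unfolding Xs_def by auto
    then have "r x = r x'" using h(3) ra r_carrier l_cancel by blast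
    then show "x = x'" using r_inj P2 by blast
  qed
  define Xp where "Xp = {x\<in>P. x \<noteq> b \<and> coll b x \<and> \<not> coll a x}"
  define Lb where "Lb = {l\<in>L. b \<in> l}"
  have XX: "Xs = insert b Xp" unfolding Xs_def Xp_def using bP nab coll_refl by auto
  have bX': "b \<notin> Xp" unfolding Xp_def by simp
  have finX': "finite Xp" unfolding Xp_def using finP by simp
  define h where "h x = (THE l. l \<in> L \<and> b \<in> l \<and> x \<in> l)" for x
  have hprop: "h x \<in> L \<and> b \<in> h x \<and> x \<in> h x" if xX: "x \<in> Xp" for x
  proof -
    have x: "x \<in> P" "x \<noteq> b" "coll b x" using xX unfolding Xp_def by auto
    have ex: "\<exists>!l. l \<in> L \<and> b \<in> l \<and> x \<in> l"
    proof -
      obtain l where l: "l \<in> L" "b \<in> l" "x \<in> l" using x(3) unfolding coll_def' by blast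
      moreover have "\<And>l'. l' \<in> L \<and> b \<in> l' \<and> x \<in> l' \<Longrightarrow> l' = l"
        using same_line l x(2) by metis
      ultimately show ?thesis by blast
    qed
    show ?thesis unfolding h_def using theI'[OF ex] .
  qed
  have bij: "bij_betw h Xp Lb"
  proof (rule bij_betw_imageI)
    show "inj_on h Xp"
    proof (rule inj_onI)
      fix x x' assume xx: "x \<in> Xp" "x' \<in> Xp" "h x = h x'"
      show "x = x'"
      proof (rule ccontr)
        assume ne: "x \<noteq> x'"
        have x: "x \<noteq> b" "\<not> coll a x" "x' \<noteq> b" "\<not> coll a x'" using xx unfolding Xp_def by auto
        have l: "h x \<in> L" "b \<in> h x" "x \<in> h x" "x' \<in> h x" using hprop[OF xx(1)] hprop[OF xx(2)] xx(3) by auto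
        have "h x = {b,x,x'}" using L_eq3[OF l(1) l(2) l(3) l(4)] x ne by metis
        then have "line3 b x x'" unfolding line3_def using l(1) x ne by metis
        then have "coll a b \<or> coll a x \<or> coll a x'" using ax_exists aP by blast
        then show False using nab x by blast
      qed
    qed
  next
    show "h ` Xp = Lb"
    proof
      show "h ` Xp \<subseteq> Lb" unfolding Lb_def using hprop by blast
    next
      show "Lb \<subseteq> h ` Xp"
      proof
        fix l assume "l \<in> Lb"
        then have l: "l \<in> L" "b \<in> l" unfolding Lb_def by auto
        obtain p q where pq: "l = {b,p,q}" "line3 b p q" using L_through[OF l] by blast
        note pc = line3_coll[OF pq(2)] and pp = line3_perm[OF pq(2)] and pn = line3_neq[OF pq(2)]
        have PP: "p \<in> P" "q \<in> P" using line3_P[OF pq(2)] by auto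
        have hl: "h z = l" if z: "z \<in> Xp" "z \<in> l" for z
        proof -
          have "h z \<in> L" "b \<in> h z" "z \<in> h z" using hprop[OF z(1)] by auto
          moreover have "z \<noteq> b" using z unfolding Xp_def by auto
          ultimately show ?thesis using same_line l z(2) by metis
        qed
        have "coll a b \<or> coll a p \<or> coll a q" using ax_exists[OF pq(2) aP] .
        then have "coll a p \<or> coll a q" using nab by blast
        then show "l \<in> h ` Xp"
        proof
          assume ap: "coll a p"
          have "a \<noteq> p" using nab pc by metis
          have naq: "\<not> coll a q"
          proof
            assume aq: "coll a q"
            have "a \<noteq> q" using nab pc by metis
            then have "a = b" using ax_unique[of p q b a] pp ap aq \<open>a \<noteq> p\<close> by metis
            then show False using ab by simp
          qed
          have "q \<in> Xp" unfolding Xp_def using PP pn pc naq by auto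
          moreover have "q \<in> l" using pq by simp
          ultimately show ?thesis using hl by (metis image_eqI)
        next
          assume aq: "coll a q"
          have "a \<noteq> q" using nab pc by metis
          have nap: "\<not> coll a p"
          proof
            assume ap: "coll a p"
            have "a \<noteq> p" using nab pc by metis
            then have "a = b" using ax_unique[of p q b a] pp ap aq \<open>a \<noteq> q\<close> by metis
            then show False using ab by simp
          qed
          have "p \<in> Xp" unfolding Xp_def using PP pn pc nap by auto
          moreover have "p \<in> l" using pq by simp
          ultimately show ?thesis using hl by (metis image_eqI)
        qed
      qed
    qed
  qed
  have "card Xp = card Lb" using bij_betw_same_card[OF bij] .
  also have "\<dots> = t + 1" unfolding Lb_def using nlines[OF bP] .
  finally have cX': "card Xp = t + 1" .
  have "card Xs = t + 2" unfolding XX using cX' bX' finX' by simp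
  then show ?thesis unfolding eq using card_image[OF inj] by simp
qed

end


theorem lemma3p8:
  fixes P :: "'p set" and L :: "'p set set" and t :: nat
    and G :: "('g, 'b) monoid_scheme" and r :: "'p \<Rightarrow> 'g"
    and a b :: 'p
  assumes "finite P"
    and "gen_quadrangle_2 P L t"
    and "faithful_representation P L G r"
    and "a \<in> P" and "b \<in> P" and "a \<noteq> b" and "\<not> collinear L a b"
  shows "card ({r a \<otimes>\<^bsub>G\<^esub> r x | x. x \<in> P \<and> x \<noteq> a \<and> \<not> collinear L a x}
            \<inter> {r b \<otimes>\<^bsub>G\<^esub> r x | x. x \<in> P \<and> x \<noteq> b \<and> \<not> collinear L b x}) = t + 2"
proof -
  interpret gqr P L t G r using assms(1-3) by unfold_locales
  show ?thesis using main assms(4-7) by blast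
qed

end
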